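(* For all $R\in\mathcal{M}$, $$\sum_{\substack{H,S,T\in\mathcal{M},\ HST\in\mathcal{S}_{\mathcal{M}}(X)\\ (S,T)=1,\ (HST,R)=1\\ \deg HS,\ \deg HT\le\frac{1}{10}\deg R}}\frac{\alpha_{-1}(HS)\alpha_{-1}(HT)}{|HST|}\deg ST \ll X^4$$ as $X\to\infty$.
   Context: $q$ prime power, $\mathcal{M}$ the monic polynomials of $\mathbb{F}_q[T]$, $P$ denotes a monic irreducible, $|A|=q^{\deg A}$, $X$ a positive integer, $\mathcal{S}_{\mathcal{M}}(X)=\{A\in\mathcal{M}: P\mid A\Rightarrow\deg P\le X\}$. The function $\alpha_{-1}$ is multiplicative with: $\alpha_{-1}(P)=-1$ if $\deg P\le X$ and $0$ if $\deg P>X$; $\alpha_{-1}(P^2)=\frac12$ if $\frac X2<\deg P\le X$ and $0$ otherwise; $\alpha_{-1}(P^3)=-\frac12$ if $\frac X2<\deg P\le X$ and $0$ otherwise; $\alpha_{-1}(P^m)=0$ for $m\ge4$. *)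

theory Defs
  imports "HOL-Computational_Algebra.Polynomial" "HOL-Computational_Algebra.Factorial_Ring"
begin

definition monic :: "'a::field poly \<Rightarrow> bool" where
  "monic A \<longleftrightarrow> lead_coeff A = 1"

definition pnorm :: "'a::{field,finite} poly \<Rightarrow> real" where
  "pnorm A = real (card (UNIV::'a set)) ^ degree A"

definition smooth :: "nat \<Rightarrow> 'a::field poly \<Rightarrow> bool" where
  "smooth X A \<longleftrightarrow> monic A \<and>
     (\<forall>P. monic P \<and> irreducible P \<and> P dvd A \<longrightarrow> degree P \<le> X)"

text \<open>Value of alpha_{-1} at the prime power P^m (P monic irreducible, m \<ge> 1).\<close>
definition alpha_pp :: "nat \<Rightarrow> 'a::field poly \<Rightarrow> nat \<Rightarrow> real" where
  "alpha_pp X P m =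
     (if m = 1 then (if degree P \<le> X then -1 else 0)
      else if m = 2 then (if real X / 2 < real (degree P) \<and> degree P \<le> X then 1/2 else 0)
      else if m = 3 then (if real X / 2 < real (degree P) \<and> degree P \<le> X then -1/2 else 0)
      else 0)"

text \<open>Exponent of P in A (the largest m with P^m dividing A; A nonzero, P nonunit).\<close>
definition pmult :: "'a::field poly \<Rightarrow> 'a poly \<Rightarrow> nat" where
  "pmult P A = (GREATEST m. P ^ m dvd A)"

definition alpha_m1 :: "nat \<Rightarrow> 'a::field poly \<Rightarrow> real" where
  "alpha_m1 X A = (\<Prod>P\<in>{P. monic P \<and> irreducible P \<and> P dvd A}.
                      alpha_pp X P (pmult P A))"

end

theory Submission imports Defs "HOL-Computational_Algebra.Polynomial_Factorial" "HOL-Library.FuncSet" Complex_Main begin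

definition PF :: "'a::field poly \<Rightarrow> 'a poly set" where
  "PF A = {P. monic P \<and> irreducible P \<and> P dvd A}"

lemma monic_nz: "monic (A::'a::field poly) \<Longrightarrow> A \<noteq> 0" by (auto simp: monic_def)

context begin
interpretation fp: 
  normalization_euclidean_semiring_multiplicative where zero = "0 :: 'a :: field poly"
    and one = 1 and plus = plus and minus = minus
    and times = times
    and normalize = "\<lambda>p. smult (inverse (lead_coeff p)) p"
    and unit_factor = "\<lambda>p. [:lead_coeff p:]"
    and euclidean_size = "\<lambda>p. if p = 0 then 0 else 2 ^ degree p"
    and divide = divide and modulo = modulo
  rewrites "dvd.dvd (times :: 'a poly \<Rightarrow> _) = Rings.dvd"
    and "comm_monoid_mult.prod_mset times 1 = prod_mset"
    and "comm_semiring_1.irreducible times 1 0 = irreducible"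
    and "comm_semiring_1.prime_elem times 1 0 = prime_elem"
proof -
  show "dvd.dvd (times :: 'a poly \<Rightarrow> _) = Rings.dvd"
    by (simp add: dvd_dict)
  show "comm_monoid_mult.prod_mset times 1 = prod_mset"
    by (simp add: prod_mset_dict)
  show "comm_semiring_1.irreducible times 1 0 = irreducible"
    by (simp add: irreducible_dict)
  show "comm_semiring_1.prime_elem times 1 0 = prime_elem"
    by (simp add: prime_elem_dict)
  show "class.normalization_euclidean_semiring_multiplicative divide plus minus (0 :: 'a poly) times 1
    modulo (\<lambda>p. if p = 0 then 0 else 2 ^ degree p)
    (\<lambda>p. [:lead_coeff p:]) (\<lambda>p. smult (inverse (lead_coeff p)) p)"
  proof (standard, fold dvd_dict)
    fix p :: "'a poly"
    show "[:lead_coeff p:] * smult (inverse (lead_coeff p)) p = p"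
      by (cases "p = 0") simp_all
  next
    fix p :: "'a poly" assume "is_unit p"
    then show "[:lead_coeff p:] = p"
      by (elim is_unit_polyE) (auto simp: monom_0 one_poly_def field_simps)
  next
    fix p :: "'a poly" assume "p \<noteq> 0"
    then show "is_unit [:lead_coeff p:]"
      by (simp add: is_unit_pCons_iff)
  next
    fix a b :: "'a poly" assume "is_unit a"
    thus "[:lead_coeff (a * b):] = a * [:lead_coeff b:]"
      by (auto elim!: is_unit_polyE)
  qed (auto simp: lead_coeff_mult Rings.div_mult_mod_eq intro!: degree_mod_less' degree_mult_right_le)
qed
lemma fp_prod: "comm_monoid_mult.prod (*) 1 = (prod :: _ \<Rightarrow> _ \<Rightarrow> 'a::field poly)" 
proof -
  have "class.comm_monoid_mult ((*) :: 'a poly \<Rightarrow> _) 1" by unfold_locales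
  then show ?thesis by (simp add: comm_monoid_mult.prod_def prod_def)
qed

lemma fp_power: "power.power 1 (*) x n = (x :: 'a::field poly) ^ n" 
  by (induction n) (simp_all add: power.power.simps)

lemma fp_power': "power.power 1 (*) = (power :: 'a::field poly \<Rightarrow> _)" 
  by (intro ext) (simp add: fp_power)

lemma fp_prime_iff: "fp.prime (P::'a::field poly) \<longleftrightarrow> monic P \<and> irreducible P"
proof
  assume "fp.prime P"
  then have pe: "prime_elem P" and n: "smult (inverse (lead_coeff P)) P = P"
    by (auto simp: fp.prime_def)
  have "P \<noteq> 0" using pe by auto
  then have "lead_coeff (smult (inverse (lead_coeff P)) P) = 1" by simp
  with n have "monic P" by (simp add: monic_def)
  moreover have "irreducible P" using pe by (simp add: prime_elem_imp_irreducible)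
  ultimately show "monic P \<and> irreducible P" by simp
next
  assume "monic P \<and> irreducible P"
  then show "fp.prime P"
    by (auto simp: fp.prime_def monic_def field_poly_irreducible_imp_prime)
qed

lemma PF_eq: "monic (A::'a::field poly) \<Longrightarrow> PF A = fp.prime_factors A"
  using monic_nz[of A] by (auto simp: PF_def fp.in_prime_factors_iff fp_prime_iff)

lemma finite_PF: "monic (A::'a::field poly) \<Longrightarrow> finite (PF A)"
  by (simp add: PF_eq)

lemma pmult_le_iff:
  assumes "monic P" "irreducible P" "monic (A::'a::field poly)"
  shows "P ^ k dvd A \<longleftrightarrow> k \<le> pmult P A"
proof -
  have A0: "A \<noteq> 0" using assms(3) monic_nz by blast
  have nu: "\<not> is_unit P" using assms(2) irreducible_not_unit by blast
  have iff: "\<And>k. P ^ k dvd A \<longleftrightarrow> k \<le> fp.multiplicity P A"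
    using fp.power_dvd_iff_le_multiplicity[OF A0 nu] by (simp add: fp_power)
  have "pmult P A = fp.multiplicity P A"
    unfolding pmult_def iff by (rule Greatest_equality) auto
  then show ?thesis using iff by simp
qed

lemma monic_factorization:
  assumes "monic (A::'a::field poly)"
  shows "A = (\<Prod>P\<in>PF A. P ^ pmult P A)"
proof -
  have A0: "A \<noteq> 0" using assms monic_nz by blast
  have e: "\<And>P. P \<in> PF A \<Longrightarrow> pmult P A = fp.multiplicity P A"
  proof -
    fix P assume "P \<in> PF A"
    then have "monic P" "irreducible P" by (auto simp: PF_def)
    then have iff: "\<And>k. P ^ k dvd A \<longleftrightarrow> k \<le> fp.multiplicity P A"
      using fp.power_dvd_iff_le_multiplicity[OF A0] irreducible_not_unit by (auto simp: fp_power)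
    show "pmult P A = fp.multiplicity P A"
      unfolding pmult_def iff by (rule Greatest_equality) auto
  qed
  have "(\<Prod>P\<in>PF A. P ^ pmult P A) = (\<Prod>P\<in>fp.prime_factors A. P ^ fp.multiplicity P A)"
    using e PF_eq[OF assms] by (auto intro!: prod.cong)
  also have "\<dots> = smult (inverse (lead_coeff A)) A"
    using fp.prod_prime_factors[OF A0] by (simp add: fp_prod fp_power')
  also have "\<dots> = A" using assms by (simp add: monic_def)
  finally show ?thesis by simp
qed
end

lemma finite_deg_le: "finite {p::'a::{zero,finite} poly. degree p \<le> n}"
proof -
  let ?f = "\<lambda>p::'a poly. map (coeff p) [0..<Suc n]"
  have "inj_on ?f {p. degree p \<le> n}"
  proof (rule inj_onI)
    fix p p' :: "'a poly"
    assume p: "p \<in> {p. degree p \<le> n}" and p': "p' \<in> {p. degree p \<le> n}" and eq: "?f p = ?f p'"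
    show "p = p'"
    proof (rule poly_eqI)
      fix i show "coeff p i = coeff p' i"
      proof (cases "i \<le> n")
        case True
        then have "?f p ! i = ?f p' ! i" using eq by (simp del: upt_Suc)
        then show ?thesis using True by (simp del: upt_Suc)
      next
        case False
        then show ?thesis using p p' by (simp add: coeff_eq_0)
      qed
    qed
  qed
  moreover have "?f ` {p. degree p \<le> n} \<subseteq> {xs. set xs \<subseteq> UNIV \<and> length xs = Suc n}" by auto
  moreover have "finite {xs. set xs \<subseteq> (UNIV::'a set) \<and> length xs = Suc n}"
    by (rule finite_lists_length_eq) simp
  ultimately show ?thesis by (meson finite_imageD finite_subset)
qed

definition Mon :: "nat \<Rightarrow> 'a::field poly set" where
  "Mon n = {A. monic A \<and> degree A = n}"

lemma finite_Mon: "finite (Mon n :: 'a::{field,finite} poly set)"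
  by (rule finite_subset[OF _ finite_deg_le[of n]]) (auto simp: Mon_def)

lemma coeff_Poly_monom:
  assumes "length xs = n"
  shows "coeff (Poly xs + monom (1::'a::field) n) i = (if i < n then xs ! i else if i = n then 1 else 0)"
  using assms by (auto simp: nth_default_def coeff_monom)

lemma degree_Poly_monom:
  assumes "length xs = n"
  shows "degree (Poly xs + monom (1::'a::field) n) = n" and "lead_coeff (Poly xs + monom (1::'a::field) n) = 1"
proof -
  have c: "\<And>i. coeff (Poly xs + monom (1::'a) n) i = (if i < n then xs ! i else if i = n then 1 else 0)"
    using coeff_Poly_monom[OF assms] by blast
  have "degree (Poly xs + monom (1::'a) n) \<le> n"
    by (rule degree_le) (simp add: c del: coeff_add coeff_Poly_eq)
  moreover have "n \<le> degree (Poly xs + monom (1::'a) n)"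
    by (rule le_degree) (simp add: c del: coeff_add coeff_Poly_eq)
  ultimately show d: "degree (Poly xs + monom (1::'a::field) n) = n" by simp
  show "lead_coeff (Poly xs + monom (1::'a::field) n) = 1" by (simp only: d c) simp
qed

lemma card_Mon: "card (Mon n :: 'a::{field,finite} poly set) = card (UNIV::'a set) ^ n"
proof -
  let ?f = "\<lambda>A::'a poly. map (coeff A) [0..<n]"
  let ?g = "\<lambda>xs. Poly xs + monom (1::'a) n"
  have "bij_betw ?f (Mon n) {xs. set xs \<subseteq> UNIV \<and> length xs = n}"
  proof (rule bij_betw_byWitness[where f' = ?g])
    show "\<forall>a\<in>Mon n. ?g (?f a) = a"
    proof
      fix A :: "'a poly" assume A: "A \<in> Mon n"
      show "?g (?f A) = A"
      proof (rule poly_eqI)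
        fix i
        have "coeff (?g (?f A)) i = (if i < n then ?f A ! i else if i = n then 1 else 0)"
          by (rule coeff_Poly_monom) simp
        also have "\<dots> = coeff A i"
          using A by (auto simp: Mon_def monic_def coeff_eq_0)
        finally show "coeff (?g (?f A)) i = coeff A i" .
      qed
    qed
    show "\<forall>a'\<in>{xs. set xs \<subseteq> UNIV \<and> length xs = n}. ?f (?g a') = a'"
    proof
      fix xs :: "'a list" assume xs: "xs \<in> {xs. set xs \<subseteq> UNIV \<and> length xs = n}"
      then have l: "length xs = n" by simp
      show "?f (?g xs) = xs"
        by (rule nth_equalityI) (use l in \<open>auto simp: coeff_Poly_monom[OF l] nth_default_def\<close>)
    qed
    show "?f ` Mon n \<subseteq> {xs. set xs \<subseteq> UNIV \<and> length xs = n}" by auto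
    show "?g ` {xs. set xs \<subseteq> UNIV \<and> length xs = n} \<subseteq> Mon n"
    proof
      fix A assume "A \<in> ?g ` {xs. set xs \<subseteq> UNIV \<and> length xs = n}"
      then obtain xs where "length xs = n" "A = ?g xs" by auto
      then show "A \<in> Mon n" using degree_Poly_monom[of xs n] by (simp only: Mon_def monic_def mem_Collect_eq)
    qed
  qed
  then have "card (Mon n :: 'a poly set) = card {xs. set xs \<subseteq> (UNIV::'a set) \<and> length xs = n}"
    by (rule bij_betw_same_card)
  also have "\<dots> = card (UNIV::'a set) ^ n" by (rule card_lists_length_eq) simp
  finally show ?thesis .
qed

lemma card_Mon_dvd:
  assumes D: "monic (D::'a::{field,finite} poly)" and n: "degree D \<le> n"
  shows "card {A \<in> Mon n. D dvd A} = card (UNIV::'a set) ^ (n - degree D)"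
proof -
  have D0: "D \<noteq> 0" using D monic_nz by blast
  have "(\<lambda>B. D * B) ` Mon (n - degree D) = {A \<in> Mon n. D dvd A}"
  proof
    show "(\<lambda>B. D * B) ` Mon (n - degree D) \<subseteq> {A \<in> Mon n. D dvd A}"
    proof
      fix A assume "A \<in> (\<lambda>B. D * B) ` Mon (n - degree D)"
      then obtain B where B: "B \<in> Mon (n - degree D)" "A = D * B" by auto
      have B0: "B \<noteq> 0" using B monic_nz by (auto simp: Mon_def)
      show "A \<in> {A \<in> Mon n. D dvd A}"
      proof -
        have "degree A = n" using B B0 D0 n by (auto simp: Mon_def degree_mult_eq)
        moreover have "lead_coeff A = 1"
        proof -
          have lb: "lead_coeff B = 1" using B unfolding Mon_def monic_def by blast
          have "lead_coeff A = lead_coeff D * lead_coeff B" using B by (simp only: lead_coeff_mult)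
          then show ?thesis using lb D by (simp add: monic_def)
        qed
        ultimately show ?thesis using B by (auto simp: Mon_def monic_def)
      qed
    qed
    show "{A \<in> Mon n. D dvd A} \<subseteq> (\<lambda>B. D * B) ` Mon (n - degree D)"
    proof
      fix A assume A: "A \<in> {A \<in> Mon n. D dvd A}"
      then obtain B where B: "A = D * B" by (auto elim: dvdE)
      have A0: "A \<noteq> 0" using A monic_nz by (auto simp: Mon_def)
      then have B0: "B \<noteq> 0" using B by auto
      have "lead_coeff B = 1" using A D B by (simp add: Mon_def monic_def lead_coeff_mult)
      moreover have "degree B = n - degree D" using A B D0 B0 by (auto simp: Mon_def degree_mult_eq)
      ultimately show "A \<in> (\<lambda>B. D * B) ` Mon (n - degree D)" using B by (auto simp: Mon_def monic_def)
    qed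
  qed
  moreover have "inj_on (\<lambda>B. D * B) (Mon (n - degree D))"
    using D0 by (auto intro: inj_onI)
  ultimately have "card {A \<in> Mon n. D dvd A} = card (Mon (n - degree D) :: 'a poly set)"
    by (metis card_image)
  then show ?thesis by (simp add: card_Mon)
qed

lemma irr_nz: "irreducible (P::'a::field poly) \<Longrightarrow> P \<noteq> 0"
  by auto

lemma irr_deg_pos: "irreducible (P::'a::field poly) \<Longrightarrow> 1 \<le> degree P"
proof (rule ccontr)
  assume P: "irreducible P" and "\<not> 1 \<le> degree P"
  then have "degree P = 0" by simp
  then have "is_unit P" using is_unit_iff_degree[OF irr_nz[OF P]] by simp
  then show False using P irreducible_not_unit by blast
qed

lemma monic_power: "monic (P::'a::field poly) \<Longrightarrow> monic (P ^ k)"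
  by (simp add: monic_def lead_coeff_power)

definition Pairs :: "nat \<Rightarrow> ('a::field poly \<times> nat) set" where
  "Pairs n = {(P,k). monic P \<and> irreducible P \<and> 1 \<le> k \<and> k * degree P \<le> n}"

lemma finite_Pairs: "finite (Pairs n :: ('a::{field,finite} poly \<times> nat) set)"
proof (rule finite_subset)
  show "Pairs n \<subseteq> {P::'a poly. degree P \<le> n} \<times> {..n}"
  proof
    fix x assume "x \<in> (Pairs n :: ('a poly \<times> nat) set)"
    then obtain P k where x: "x = (P,k)" and P: "irreducible P" "1 \<le> k" "k * degree P \<le> n"
      by (auto simp: Pairs_def)
    have d: "1 \<le> degree P" using irr_deg_pos[OF P(1)] .
    have "k \<le> k * degree P" using d by simp
    moreover have "degree P \<le> k * degree P" using P(2) by simp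
    ultimately have "degree P \<le> n" "k \<le> n" using P(3) by linarith+
    then show "x \<in> {P::'a poly. degree P \<le> n} \<times> {..n}" using x by auto
  qed
  show "finite ({P::'a poly. degree P \<le> n} \<times> {..n})" using finite_deg_le by blast
qed

lemma degree_monic:
  assumes "monic (A::'a::field poly)"
  shows "degree A = (\<Sum>P\<in>PF A. pmult P A * degree P)"
proof -
  have "degree A = degree (\<Prod>P\<in>PF A. P ^ pmult P A)"
    using monic_factorization[OF assms] by simp
  also have "\<dots> = (\<Sum>P\<in>PF A. degree (P ^ pmult P A))"
    by (rule degree_prod_sum_eq) (auto simp: PF_def monic_def)
  also have "\<dots> = (\<Sum>P\<in>PF A. pmult P A * degree P)"
    by (rule sum.cong) (auto simp: PF_def degree_power_eq monic_nz)
  finally show ?thesis .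
qed

lemma degree_pairs:
  assumes A: "monic (A::'a::{field,finite} poly)" and N: "degree A \<le> N"
  shows "degree A = (\<Sum>(P,k)\<in>{(P,k)\<in>Pairs N. P ^ k dvd A}. degree P)"
proof -
  have A0: "A \<noteq> 0" using A monic_nz by blast
  have eq: "{(P,k)\<in>Pairs N. P ^ k dvd A} = Sigma (PF A) (\<lambda>P. {1..pmult P A})"
  proof
    show "{(P,k)\<in>Pairs N. P ^ k dvd A} \<subseteq> Sigma (PF A) (\<lambda>P. {1..pmult P A})"
    proof
      fix x assume "x \<in> {(P,k)\<in>Pairs N. P ^ k dvd A}"
      then obtain P k where x: "x = (P,k)" and P: "monic P" "irreducible P" "1 \<le> k" "P ^ k dvd A"
        by (auto simp: Pairs_def)
      have "P dvd P ^ k" using P(3) by (simp add: dvd_power)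
      then have "P dvd A" using P(4) dvd_trans by blast
      then have "P \<in> PF A" using P by (simp add: PF_def)
      moreover have "k \<le> pmult P A" using pmult_le_iff[OF P(1,2) A] P(4) by simp
      ultimately show "x \<in> Sigma (PF A) (\<lambda>P. {1..pmult P A})" using x P(3) by auto
    qed
    show "Sigma (PF A) (\<lambda>P. {1..pmult P A}) \<subseteq> {(P,k)\<in>Pairs N. P ^ k dvd A}"
    proof
      fix x assume "x \<in> Sigma (PF A) (\<lambda>P. {1..pmult P A})"
      then obtain P k where x: "x = (P,k)" and P: "monic P" "irreducible P" "1 \<le> k" "k \<le> pmult P A"
        by (auto simp: PF_def)
      have d: "P ^ k dvd A" using pmult_le_iff[OF P(1,2) A] P(4) by simp
      have "degree (P ^ k) \<le> degree A" using dvd_imp_degree_le[OF d A0] .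
      then have "k * degree P \<le> N" using N irr_nz[OF P(2)] by (simp add: degree_power_eq)
      then show "x \<in> {(P,k)\<in>Pairs N. P ^ k dvd A}" using x P d by (auto simp: Pairs_def)
    qed
  qed
  have fin: "finite (PF A)" using finite_PF[OF A] .
  have "(\<Sum>(P,k)\<in>{(P,k)\<in>Pairs N. P ^ k dvd A}. degree P) = (\<Sum>(P,k)\<in>Sigma (PF A) (\<lambda>P. {1..pmult P A}). degree P)"
    by (simp only: eq)
  also have "\<dots> = (\<Sum>P\<in>PF A. \<Sum>k\<in>{1..pmult P A}. degree P)"
    by (rule sum.Sigma[symmetric]) (use fin in auto)
  also have "\<dots> = (\<Sum>P\<in>PF A. pmult P A * degree P)" by simp
  also have "\<dots> = degree A" using degree_monic[OF A] by simp
  finally show ?thesis by simp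
qed

lemma count_identity:
  "n * card (UNIV::'a::{field,finite} set) ^ n =
     (\<Sum>(P,k)\<in>(Pairs n :: ('a poly \<times> nat) set). degree P * card (UNIV::'a set) ^ (n - k * degree P))"
proof -
  let ?q = "card (UNIV::'a set)"
  have "n * ?q ^ n = (\<Sum>A\<in>(Mon n :: 'a poly set). degree A)"
    by (simp add: Mon_def card_Mon[symmetric])
  also have "\<dots> = (\<Sum>A\<in>(Mon n :: 'a poly set). \<Sum>(P,k)\<in>Pairs n. if P ^ k dvd A then degree P else 0)"
  proof (rule sum.cong[OF refl])
    fix A :: "'a poly" assume A: "A \<in> Mon n"
    have "degree A = (\<Sum>(P,k)\<in>{(P,k)\<in>Pairs n. P ^ k dvd A}. degree P)"
      using A by (intro degree_pairs) (auto simp: Mon_def)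
    also have "\<dots> = (\<Sum>(P,k)\<in>Pairs n. if P ^ k dvd A then degree P else 0)"
    proof -
      have e: "{(P,k)\<in>Pairs n. P ^ k dvd A} = {x\<in>Pairs n. fst x ^ snd x dvd A}" by auto
      show ?thesis unfolding e unfolding case_prod_unfold by (rule sum.inter_filter[OF finite_Pairs])
    qed
    finally show "degree A = (\<Sum>(P,k)\<in>Pairs n. if P ^ k dvd A then degree P else 0)" .
  qed
  also have "\<dots> = (\<Sum>(P,k)\<in>Pairs n. \<Sum>A\<in>(Mon n :: 'a poly set). if P ^ k dvd A then degree P else 0)"
    by (subst sum.swap) (simp add: case_prod_unfold)
  also have "\<dots> = (\<Sum>(P,k)\<in>(Pairs n :: ('a poly \<times> nat) set). degree P * ?q ^ (n - k * degree P))"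
  proof (rule sum.cong[OF refl])
    fix x assume x: "x \<in> (Pairs n :: ('a poly \<times> nat) set)"
    obtain P k where xe: "x = (P,k)" by (cases x)
    have P: "monic P" "irreducible P" "k * degree P \<le> n" using x xe by (auto simp: Pairs_def)
    have dk: "degree (P ^ k) = k * degree P" using irr_nz[OF P(2)] by (simp add: degree_power_eq)
    have "(\<Sum>A\<in>(Mon n :: 'a poly set). if P ^ k dvd A then degree P else 0)
          = (\<Sum>A\<in>{A \<in> Mon n. P ^ k dvd A}. degree P)"
      by (rule sum.inter_filter[OF finite_Mon, symmetric])
    also have "\<dots> = degree P * card {A \<in> Mon n. P ^ k dvd A}" by simp
    also have "\<dots> = degree P * ?q ^ (n - k * degree P)"
      using card_Mon_dvd[OF monic_power[OF P(1)], of k n] dk P(3) by simp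
    finally show "(case x of (P,k) \<Rightarrow> \<Sum>A\<in>(Mon n :: 'a poly set). if P ^ k dvd A then degree P else 0)
          = (case x of (P,k) \<Rightarrow> degree P * ?q ^ (n - k * degree P))" using xe by simp
  qed
  finally show ?thesis .
qed

definition IrrD :: "nat \<Rightarrow> 'a::field poly set" where
  "IrrD d = {P. monic P \<and> irreducible P \<and> degree P = d}"

lemma finite_IrrD: "finite (IrrD d :: 'a::{field,finite} poly set)"
  by (rule finite_subset[OF _ finite_deg_le[of d]]) (auto simp: IrrD_def)

lemma pi_bound:
  assumes d: "1 \<le> d"
  shows "d * card (IrrD d :: 'a::{field,finite} poly set) \<le> card (UNIV::'a set) ^ d"
proof -
  let ?q = "card (UNIV::'a set)"
  define T where "T n = (\<Sum>(P,k)\<in>(Pairs n :: ('a poly \<times> nat) set). degree P * ?q ^ (n - k * degree P))" for n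
  define E where "E = {(P,k)\<in>(Pairs d :: ('a poly \<times> nat) set). k * degree P = d}"
  have split: "Pairs d = Pairs (d - 1) \<union> E" using d by (auto simp: Pairs_def E_def)
  have disj: "Pairs (d - 1) \<inter> E = {}"
  proof (rule ccontr)
    assume "Pairs (d - 1) \<inter> E \<noteq> {}"
    then obtain x where x: "x \<in> Pairs (d - 1)" "x \<in> E" by blast
    obtain P k where xe: "x = (P,k)" by (cases x)
    have "k * degree P \<le> d - 1" "k * degree P = d" using x xe by (auto simp: Pairs_def E_def)
    then show False using d by linarith
  qed
  have finE: "finite E" using finite_Pairs[of d] by (auto simp: E_def intro: finite_subset)
  have "T d = (\<Sum>(P,k)\<in>(Pairs (d - 1) :: ('a poly \<times> nat) set). degree P * ?q ^ (d - k * degree P)) +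
              (\<Sum>(P,k)\<in>E. degree P * ?q ^ (d - k * degree P))"
    unfolding T_def split by (rule sum.union_disjoint[OF finite_Pairs finE disj])
  also have "(\<Sum>(P,k)\<in>(Pairs (d - 1) :: ('a poly \<times> nat) set). degree P * ?q ^ (d - k * degree P)) = ?q * T (d - 1)"
    unfolding T_def sum_distrib_left
  proof (rule sum.cong[OF refl])
    fix x assume x: "x \<in> (Pairs (d - 1) :: ('a poly \<times> nat) set)"
    obtain P k where xe: "x = (P,k)" by (cases x)
    have "k * degree P \<le> d - 1" using x xe by (auto simp: Pairs_def)
    then have "d - k * degree P = Suc (d - 1 - k * degree P)" using d by simp
    then show "(case x of (P,k) \<Rightarrow> degree P * ?q ^ (d - k * degree P)) =
               ?q * (case x of (P,k) \<Rightarrow> degree P * ?q ^ (d - 1 - k * degree P))"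
      using xe by simp
  qed
  also have "(\<Sum>(P,k)\<in>E. degree P * ?q ^ (d - k * degree P)) = (\<Sum>(P,k)\<in>E. degree P)"
    by (rule sum.cong) (auto simp: E_def)
  finally have eq: "T d = ?q * T (d - 1) + (\<Sum>(P,k)\<in>E. degree P)" .
  have Td: "T d = d * ?q ^ d" unfolding T_def by (rule count_identity[symmetric])
  have Td1: "T (d - 1) = (d - 1) * ?q ^ (d - 1)" unfolding T_def by (rule count_identity[symmetric])
  have "?q * T (d - 1) = (d - 1) * ?q ^ d"
    using Td1 d by (simp add: power_eq_if)
  with eq Td have "d * ?q ^ d = (d - 1) * ?q ^ d + (\<Sum>(P,k)\<in>E. degree P)" by simp
  moreover have "d * ?q ^ d = (d - 1) * ?q ^ d + ?q ^ d" using d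
    by (metis Suc_diff_le diff_Suc_1 mult_Suc add.commute)
  ultimately have SE: "(\<Sum>(P,k)\<in>E. degree P) = ?q ^ d" by simp
  have sub: "(\<lambda>P. (P, 1::nat)) ` (IrrD d :: 'a poly set) \<subseteq> E" by (auto simp: IrrD_def E_def Pairs_def)
  have "d * card (IrrD d :: 'a poly set) = (\<Sum>P\<in>(IrrD d :: 'a poly set). degree P)"
    by (simp add: IrrD_def)
  also have "\<dots> = (\<Sum>(P,k)\<in>(\<lambda>P. (P, 1::nat)) ` (IrrD d :: 'a poly set). degree P)"
    by (subst sum.reindex) (auto simp: inj_on_def)
  also have "\<dots> \<le> (\<Sum>(P,k)\<in>E. degree P)"
    by (rule sum_mono2[OF finE sub]) auto
  finally show ?thesis using SE by simp
qed

definition Irr :: "nat \<Rightarrow> 'a::field poly set" where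
  "Irr X = {P. monic P \<and> irreducible P \<and> degree P \<le> X}"

lemma finite_Irr: "finite (Irr X :: 'a::{field,finite} poly set)"
  by (rule finite_subset[OF _ finite_deg_le[of X]]) (auto simp: Irr_def)

lemma card_ge2: "2 \<le> card (UNIV::'a::{field,finite} set)"
proof -
  have "card {0::'a, 1} = 2" by simp
  moreover have "card {0::'a, 1} \<le> card (UNIV::'a set)" by (rule card_mono) auto
  ultimately show ?thesis by simp
qed

lemma sum_Irr_group:
  fixes f :: "nat \<Rightarrow> real"
  shows "(\<Sum>P\<in>(Irr X :: 'a::{field,finite} poly set). f (degree P)) =
         (\<Sum>d\<in>{1..X}. real (card (IrrD d :: 'a poly set)) * f d)"
proof -
  have "(\<Sum>P\<in>(Irr X :: 'a poly set). f (degree P)) =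
        (\<Sum>d\<in>{1..X}. \<Sum>P\<in>{P \<in> (Irr X :: 'a poly set). degree P = d}. f (degree P))"
    by (rule sum.group[symmetric, OF finite_Irr]) (auto simp: Irr_def dest: irr_deg_pos)
  also have "\<dots> = (\<Sum>d\<in>{1..X}. real (card (IrrD d :: 'a poly set)) * f d)"
  proof (rule sum.cong[OF refl])
    fix d assume "d \<in> {1..X}"
    then have e: "{P \<in> (Irr X :: 'a poly set). degree P = d} = IrrD d"
      by (auto simp: Irr_def IrrD_def)
    show "(\<Sum>P\<in>{P \<in> (Irr X :: 'a poly set). degree P = d}. f (degree P)) =
          real (card (IrrD d :: 'a poly set)) * f d"
      unfolding e by (simp add: IrrD_def)
  qed
  finally show ?thesis .
qed

lemma pi_bound_real:
  assumes "1 \<le> d"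
  shows "real (card (IrrD d :: 'a::{field,finite} poly set)) \<le> real (card (UNIV::'a set)) ^ d / real d"
proof -
  have "real (d * card (IrrD d :: 'a poly set)) \<le> real (card (UNIV::'a set) ^ d)"
    using pi_bound[OF assms, where 'a='a] by (rule of_nat_mono)
  then have "real d * real (card (IrrD d :: 'a poly set)) \<le> real (card (UNIV::'a set)) ^ d" by simp
  then show ?thesis using assms by (simp add: field_simps)
qed

lemma sum_Irr_inv:
  "(\<Sum>P\<in>(Irr X :: 'a::{field,finite} poly set). 1 / real (card (UNIV::'a set)) ^ degree P)
     \<le> (\<Sum>d\<in>{1..X}. 1 / real d)"
proof -
  let ?q = "real (card (UNIV::'a set))"
  have q: "?q > 0" using card_ge2[where 'a='a] by simp
  have "(\<Sum>P\<in>(Irr X :: 'a poly set). 1 / ?q ^ degree P) = (\<Sum>d\<in>{1..X}. real (card (IrrD d :: 'a poly set)) * (1 / ?q ^ d))"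
    by (rule sum_Irr_group)
  also have "\<dots> \<le> (\<Sum>d\<in>{1..X}. 1 / real d)"
  proof (rule sum_mono)
    fix d assume d: "d \<in> {1..X}"
    have "real (card (IrrD d :: 'a poly set)) * (1 / ?q ^ d) \<le> (?q ^ d / real d) * (1 / ?q ^ d)"
      by (rule mult_right_mono[OF pi_bound_real]) (use d q in auto)
    also have "\<dots> = 1 / real d" using q by simp
    finally show "real (card (IrrD d :: 'a poly set)) * (1 / ?q ^ d) \<le> 1 / real d" .
  qed
  finally show ?thesis .
qed

lemma sum_Irr_deg:
  "(\<Sum>P\<in>(Irr X :: 'a::{field,finite} poly set). real (degree P) / real (card (UNIV::'a set)) ^ degree P)
     \<le> real X"
proof -
  let ?q = "real (card (UNIV::'a set))"
  have q: "?q > 0" using card_ge2[where 'a='a] by simp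
  have "(\<Sum>P\<in>(Irr X :: 'a poly set). real (degree P) / ?q ^ degree P) = (\<Sum>d\<in>{1..X}. real (card (IrrD d :: 'a poly set)) * (real d / ?q ^ d))"
    by (rule sum_Irr_group)
  also have "\<dots> \<le> (\<Sum>d\<in>{1..X}. 1)"
  proof (rule sum_mono)
    fix d assume d: "d \<in> {1..X}"
    have "real (card (IrrD d :: 'a poly set)) * (real d / ?q ^ d) \<le> (?q ^ d / real d) * (real d / ?q ^ d)"
      by (rule mult_right_mono[OF pi_bound_real]) (use d q in auto)
    also have "\<dots> = 1" using q d by simp
    finally show "real (card (IrrD d :: 'a poly set)) * (real d / ?q ^ d) \<le> 1" .
  qed
  also have "\<dots> = real X" by simp
  finally show ?thesis .
qed

lemma sum_half_pow: "(\<Sum>d\<in>{1..X}. (1/2::real) ^ d) \<le> 1"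
proof -
  have "(\<Sum>d\<in>{1..X}. (1/2::real) ^ d) = 1 - (1/2) ^ X"
    by (induction X) (auto simp: atLeastAtMostSuc_conv)
  then show ?thesis by simp
qed

lemma sum_Irr_sq:
  "(\<Sum>P\<in>(Irr X :: 'a::{field,finite} poly set). (1 / real (card (UNIV::'a set)) ^ degree P)\<^sup>2) \<le> 1"
proof -
  let ?q = "real (card (UNIV::'a set))"
  have q: "?q \<ge> 2" using card_ge2[where 'a='a] by linarith
  have "(\<Sum>P\<in>(Irr X :: 'a poly set). (1 / ?q ^ degree P)\<^sup>2) = (\<Sum>d\<in>{1..X}. real (card (IrrD d :: 'a poly set)) * (1 / ?q ^ d)\<^sup>2)"
    by (rule sum_Irr_group)
  also have "\<dots> \<le> (\<Sum>d\<in>{1..X}. (1/2) ^ d)"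
  proof (rule sum_mono)
    fix d assume d: "d \<in> {1..X}"
    have "real (card (IrrD d :: 'a poly set)) * (1 / ?q ^ d)\<^sup>2 \<le> (?q ^ d / real d) * (1 / ?q ^ d)\<^sup>2"
      by (rule mult_right_mono[OF pi_bound_real]) (use d q in auto)
    also have "\<dots> = (1 / ?q ^ d) / real d" using q by (simp add: power2_eq_square)
    also have "\<dots> \<le> 1 / ?q ^ d" using d q by (simp add: divide_le_cancel field_simps)
    also have "\<dots> \<le> (1/2) ^ d"
    proof -
      have "2 ^ d \<le> ?q ^ d" using q by (rule power_mono) simp
      then have "1 / ?q ^ d \<le> 1 / 2 ^ d" by (rule divide_left_mono) (use q in auto)
      then show ?thesis by (simp add: power_one_over)
    qed
    finally show "real (card (IrrD d :: 'a poly set)) * (1 / ?q ^ d)\<^sup>2 \<le> (1/2) ^ d" .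
  qed
  also have "\<dots> \<le> 1" by (rule sum_half_pow)
  finally show ?thesis .
qed

lemma exp_harm: "1 \<le> X \<Longrightarrow> exp (\<Sum>d\<in>{1..X}. 1 / real d) \<le> exp 1 * real X"
proof (induction X rule: dec_induct)
  case base
  then show ?case by simp
next
  case (step n)
  have n: "1 \<le> n" by fact
  have "exp (\<Sum>d\<in>{1..Suc n}. 1 / real d) = exp (\<Sum>d\<in>{1..n}. 1 / real d) * exp (1 / real (Suc n))"
    by (simp add: exp_add)
  also have "exp (1 / real (Suc n)) \<le> real (Suc n) / real n"
  proof -
    have "1 + (- 1 / real (Suc n)) \<le> exp (- 1 / real (Suc n))" by (rule exp_ge_add_one_self)
    moreover have "1 + (- 1 / real (Suc n)) = real n / real (Suc n)" by (simp add: field_simps)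
    ultimately have h: "real n / real (Suc n) \<le> inverse (exp (1 / real (Suc n)))"
      by (simp add: exp_minus[symmetric])
    have "exp (1 / real (Suc n)) = inverse (inverse (exp (1 / real (Suc n))))" by simp
    also have "\<dots> \<le> inverse (real n / real (Suc n))"
      by (rule le_imp_inverse_le[OF h]) (use n in simp)
    also have "\<dots> = real (Suc n) / real n" by simp
    finally show ?thesis .
  qed
  then have "exp (\<Sum>d\<in>{1..n}. 1 / real d) * exp (1 / real (Suc n)) \<le> (exp 1 * real n) * (real (Suc n) / real n)"
    by (rule mult_mono[OF step.IH]) auto
  also have "\<dots> = exp 1 * real (Suc n)" using n by simp
  finally show ?case .
qed

definition Sm :: "nat \<Rightarrow> nat \<Rightarrow> 'a::field poly set" where
  "Sm X D = {A. smooth X A \<and> degree A \<le> D}"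

lemma finite_Sm: "finite (Sm X D :: 'a::{field,finite} poly set)"
  by (rule finite_subset[OF _ finite_deg_le[of D]]) (auto simp: Sm_def)

lemma pmult_zero:
  assumes "monic P" "irreducible P" "monic (A::'a::field poly)" "\<not> P dvd A"
  shows "pmult P A = 0"
  using pmult_le_iff[OF assms(1-3), of 1] assms(4) by simp

lemma PF_sub_Irr: "smooth X (A::'a::field poly) \<Longrightarrow> PF A \<subseteq> Irr X"
  by (auto simp: smooth_def PF_def Irr_def)

lemma smooth_factorization:
  assumes "smooth X (A::'a::{field,finite} poly)"
  shows "A = (\<Prod>P\<in>Irr X. P ^ pmult P A)"
proof -
  have A: "monic A" using assms by (simp add: smooth_def)
  have "A = (\<Prod>P\<in>PF A. P ^ pmult P A)" by (rule monic_factorization[OF A])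
  also have "\<dots> = (\<Prod>P\<in>Irr X. P ^ pmult P A)"
  proof (rule prod.mono_neutral_left[OF finite_Irr PF_sub_Irr[OF assms]])
    show "\<forall>i\<in>Irr X - PF A. i ^ pmult i A = 1"
      using A by (auto simp: Irr_def PF_def pmult_zero)
  qed
  finally show ?thesis .
qed

lemma smooth_degree:
  assumes "smooth X (A::'a::{field,finite} poly)"
  shows "degree A = (\<Sum>P\<in>Irr X. pmult P A * degree P)"
proof -
  have "degree A = degree (\<Prod>P\<in>Irr X. P ^ pmult P A)"
    using smooth_factorization[OF assms] by simp
  also have "\<dots> = (\<Sum>P\<in>Irr X. degree (P ^ pmult P A))"
    by (rule degree_prod_sum_eq) (auto simp: Irr_def monic_def)
  also have "\<dots> = (\<Sum>P\<in>Irr X. pmult P A * degree P)"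
    by (rule sum.cong) (auto simp: Irr_def degree_power_eq monic_nz)
  finally show ?thesis .
qed

lemma smooth_weight:
  assumes "smooth X (A::'a::{field,finite} poly)"
  shows "1 / real (card (UNIV::'a set)) ^ degree A =
         (\<Prod>P\<in>Irr X. (1 / real (card (UNIV::'a set)) ^ degree P) ^ pmult P A)"
proof -
  let ?q = "real (card (UNIV::'a set))"
  have "?q ^ degree A = (\<Prod>P\<in>Irr X. ?q ^ (pmult P A * degree P))"
    by (simp add: smooth_degree[OF assms] power_sum)
  then have "1 / ?q ^ degree A = (\<Prod>P\<in>Irr X. 1 / ?q ^ (pmult P A * degree P))"
    by (simp add: prod_dividef)
  also have "\<dots> = (\<Prod>P\<in>Irr X. (1 / ?q ^ degree P) ^ pmult P A)"
    by (rule prod.cong) (auto simp: power_one_over power_mult[symmetric] mult.commute)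
  finally show ?thesis .
qed

lemma pmult_le_D:
  assumes "smooth X (A::'a::{field,finite} poly)" "degree A \<le> D" "P \<in> Irr X"
  shows "pmult P A \<le> D"
proof -
  have A: "monic A" using assms by (simp add: smooth_def)
  have P: "monic P" "irreducible P" using assms(3) by (auto simp: Irr_def)
  have "P ^ pmult P A dvd A" using pmult_le_iff[OF P A] by simp
  then have "degree (P ^ pmult P A) \<le> degree A" using monic_nz[OF A] by (rule dvd_imp_degree_le)
  then have "pmult P A * degree P \<le> D" using assms(2) irr_nz[OF P(2)] by (simp add: degree_power_eq)
  moreover have "pmult P A \<le> pmult P A * degree P" using irr_deg_pos[OF P(2)] by simp
  ultimately show ?thesis by linarith
qed

lemma euler_product:
  "(\<Sum>A\<in>(Sm X D :: 'a::{field,finite} poly set). 1 / real (card (UNIV::'a set)) ^ degree A)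
     \<le> (\<Prod>P\<in>(Irr X :: 'a poly set). \<Sum>k\<in>{..D}. (1 / real (card (UNIV::'a set)) ^ degree P) ^ k)"
proof -
  let ?q = "real (card (UNIV::'a set))"
  let ?x = "\<lambda>P::'a poly. 1 / ?q ^ degree P"
  let ?e = "\<lambda>A::'a poly. restrict (\<lambda>P. pmult P A) (Irr X)"
  have inj: "inj_on ?e (Sm X D)"
  proof (rule inj_onI)
    fix A B assume A: "A \<in> Sm X D" and B: "B \<in> Sm X D" and eq: "?e A = ?e B"
    have "\<And>P. P \<in> Irr X \<Longrightarrow> pmult P A = pmult P B"
    proof -
      fix P assume "P \<in> (Irr X :: 'a poly set)"
      then show "pmult P A = pmult P B" using fun_cong[OF eq, of P] by simp
    qed
    then have "(\<Prod>P\<in>Irr X. P ^ pmult P A) = (\<Prod>P\<in>Irr X. P ^ pmult P B)"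
      by (intro prod.cong) auto
    then show "A = B" using smooth_factorization[of X A] smooth_factorization[of X B] A B
      by (simp add: Sm_def)
  qed
  have sub: "?e ` Sm X D \<subseteq> PiE (Irr X) (\<lambda>_. {..D})"
    using pmult_le_D by (auto simp: Sm_def restrict_PiE_iff)
  have "(\<Sum>A\<in>Sm X D. ?x A) = (\<Sum>A\<in>Sm X D. \<Prod>P\<in>Irr X. ?x P ^ ?e A P)"
    by (rule sum.cong) (auto simp: Sm_def smooth_weight[of X])
  also have "\<dots> = (\<Sum>g\<in>?e ` Sm X D. \<Prod>P\<in>Irr X. ?x P ^ g P)"
    by (simp add: sum.reindex[OF inj] o_def)
  also have "\<dots> \<le> (\<Sum>g\<in>PiE (Irr X) (\<lambda>_. {..D}). \<Prod>P\<in>Irr X. ?x P ^ g P)"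
    by (rule sum_mono2[OF finite_PiE[OF finite_Irr] sub]) (auto intro: prod_nonneg)
  also have "\<dots> = (\<Prod>P\<in>Irr X. \<Sum>k\<in>{..D}. ?x P ^ k)"
    by (rule prod_sum_PiE[symmetric]) (auto simp: finite_Irr)
  finally show ?thesis .
qed

lemma geom_exp:
  fixes x :: real
  assumes "0 \<le> x" "x \<le> 1/2"
  shows "(\<Sum>k\<in>{..D}. x ^ k) \<le> exp (x + 2 * x\<^sup>2)"
proof -
  have "(\<Sum>k\<in>{..D}. x ^ k) = (\<Sum>k<Suc D. x ^ k)" by (simp add: lessThan_Suc_atMost)
  also have "\<dots> = (1 - x ^ Suc D) / (1 - x)" using assms by (subst sum_gp_strict) simp
  also have "\<dots> \<le> 1 / (1 - x)" using assms by (simp add: divide_right_mono)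
  also have "\<dots> \<le> exp (x + 2 * x\<^sup>2)"
  proof -
    have "- x - 2 * x\<^sup>2 \<le> ln (1 - x)" by (rule ln_one_minus_pos_lower_bound[OF assms])
    moreover have "0 < 1 - x" using assms by simp
    ultimately have "exp (- x - 2 * x\<^sup>2) \<le> exp (ln (1 - x))" by (simp only: exp_le_cancel_iff)
    then have "exp (- x - 2 * x\<^sup>2) \<le> 1 - x" using \<open>0 < 1 - x\<close> by simp
    moreover have "exp (- x - 2 * x\<^sup>2) = inverse (exp (x + 2 * x\<^sup>2))"
      by (simp add: exp_minus[symmetric])
    ultimately have "inverse (exp (x + 2 * x\<^sup>2)) \<le> 1 - x" by simp
    then have "inverse (1 - x) \<le> inverse (inverse (exp (x + 2 * x\<^sup>2)))"
      by (rule le_imp_inverse_le) simp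
    then show ?thesis by (simp add: divide_inverse)
  qed
  finally show ?thesis .
qed

lemma Z_bound:
  assumes X: "1 \<le> X"
  shows "(\<Sum>A\<in>(Sm X D :: 'a::{field,finite} poly set). 1 / real (card (UNIV::'a set)) ^ degree A)
     \<le> exp 3 * real X"
proof -
  let ?q = "real (card (UNIV::'a set))"
  let ?x = "\<lambda>P::'a poly. 1 / ?q ^ degree P"
  have q: "?q \<ge> 2" using card_ge2[where 'a='a] by linarith
  have xb: "\<And>P. P \<in> Irr X \<Longrightarrow> 0 \<le> ?x P \<and> ?x P \<le> 1/2"
  proof -
    fix P assume P: "P \<in> (Irr X :: 'a poly set)"
    have d: "1 \<le> degree P" using P irr_deg_pos by (auto simp: Irr_def)
    have "2 \<le> ?q ^ 1" using q by simp
    also have "\<dots> \<le> ?q ^ degree P" by (rule power_increasing[OF d]) (use q in simp)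
    finally have "2 \<le> ?q ^ degree P" .
    moreover have "?q ^ degree P > 0" using q by simp
    ultimately show "0 \<le> ?x P \<and> ?x P \<le> 1/2" by (auto simp: field_simps)
  qed
  have "(\<Sum>A\<in>(Sm X D :: 'a poly set). ?x A) \<le> (\<Prod>P\<in>Irr X. \<Sum>k\<in>{..D}. ?x P ^ k)"
    by (rule euler_product)
  also have "\<dots> \<le> (\<Prod>P\<in>Irr X. exp (?x P + 2 * (?x P)\<^sup>2))"
    by (rule prod_mono) (use xb geom_exp in \<open>auto intro: sum_nonneg\<close>)
  also have "\<dots> = exp (\<Sum>P\<in>Irr X. ?x P + 2 * (?x P)\<^sup>2)"
    by (rule exp_sum[symmetric, OF finite_Irr])
  also have "(\<Sum>P\<in>Irr X. ?x P + 2 * (?x P)\<^sup>2) = (\<Sum>P\<in>Irr X. ?x P) + 2 * (\<Sum>P\<in>(Irr X :: 'a poly set). (?x P)\<^sup>2)"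
    by (simp add: sum.distrib sum_distrib_left)
  also have "\<dots> \<le> (\<Sum>d\<in>{1..X}. 1 / real d) + 2 * 1"
    using sum_Irr_inv[of X, where 'a='a] sum_Irr_sq[of X, where 'a='a] by linarith
  also have "exp ((\<Sum>d\<in>{1..X}. 1 / real d) + 2 * 1) = exp (\<Sum>d\<in>{1..X}. 1 / real d) * exp 2"
    by (simp add: exp_add)
  also have "\<dots> \<le> (exp 1 * real X) * exp 2"
    by (rule mult_right_mono[OF exp_harm[OF X]]) simp
  also have "\<dots> = exp 3 * real X"
    by (simp add: mult.commute mult.left_commute exp_add[symmetric])
  finally show ?thesis by simp
qed

lemma smooth_dvd:
  assumes "smooth X (C::'a::field poly)" "monic A" "A dvd C"
  shows "smooth X A"
  using assms by (auto simp: smooth_def intro: dvd_trans)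

lemma geom_shift:
  fixes x :: real
  assumes "0 \<le> x" "x \<le> 1/2"
  shows "(\<Sum>k\<in>{1..D}. x ^ k) \<le> 2 * x"
proof -
  have e: "{..D} = insert 0 {1..D}" by auto
  have "(\<Sum>k\<in>{..D}. x ^ k) = 1 + (\<Sum>k\<in>{1..D}. x ^ k)"
    unfolding e by (subst sum.insert) auto
  moreover have "(\<Sum>k\<in>{..D}. x ^ k) \<le> 1 / (1 - x)"
  proof -
    have "(\<Sum>k\<in>{..D}. x ^ k) = (\<Sum>k<Suc D. x ^ k)" by (simp add: lessThan_Suc_atMost)
    also have "\<dots> = (1 - x ^ Suc D) / (1 - x)" using assms by (subst sum_gp_strict) simp
    also have "\<dots> \<le> 1 / (1 - x)" using assms by (simp add: divide_right_mono)
    finally show ?thesis .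
  qed
  moreover have "1 / (1 - x) \<le> 1 + 2 * x"
  proof -
    have "0 \<le> x * (1 - 2 * x)" using assms by (intro mult_nonneg_nonneg) auto
    then have "1 \<le> (1 + 2 * x) * (1 - x)" by (simp add: algebra_simps)
    then show ?thesis using assms by (simp add: divide_le_eq)
  qed
  ultimately show ?thesis by linarith
qed

lemma W_bound:
  assumes X: "1 \<le> X"
  shows "(\<Sum>S\<in>(Sm X D :: 'a::{field,finite} poly set). real (degree S) / real (card (UNIV::'a set)) ^ degree S)
     \<le> 2 * real X * (\<Sum>S\<in>(Sm X D :: 'a poly set). 1 / real (card (UNIV::'a set)) ^ degree S)"
proof -
  let ?S = "Sm X D :: 'a poly set"
  let ?q = "real (card (UNIV::'a set))"
  let ?w = "\<lambda>S::'a poly. 1 / ?q ^ degree S"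
  let ?Z = "\<Sum>S\<in>?S. ?w S"
  let ?T = "(Irr X :: 'a poly set) \<times> {1..D}"
  have q: "?q \<ge> 2" using card_ge2[where 'a='a] by linarith
  have finT: "finite ?T" using finite_Irr[of X, where 'a='a] by simp
  have Z0: "?Z \<ge> 0" by (auto intro: sum_nonneg)
  define g where "g = (\<lambda>(P::'a poly,k::nat). if P \<in> Irr X \<and> k \<in> {1..D} then real (degree P) * ?w P ^ k * ?Z else 0)"
  have g0: "\<And>y. g y \<ge> 0" using Z0 by (auto simp: g_def intro!: mult_nonneg_nonneg)
  have "(\<Sum>S\<in>?S. real (degree S) / ?q ^ degree S)
        = (\<Sum>S\<in>?S. \<Sum>(P,k)\<in>(Pairs D :: ('a poly \<times> nat) set). if P ^ k dvd S then real (degree P) * ?w S else 0)"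
  proof (rule sum.cong[OF refl])
    fix S :: "'a poly" assume S: "S \<in> ?S"
    have "degree S = (\<Sum>(P,k)\<in>{(P,k)\<in>(Pairs D :: ('a poly \<times> nat) set). P ^ k dvd S}. degree P)"
      using S by (intro degree_pairs) (auto simp: Sm_def smooth_def)
    also have "\<dots> = (\<Sum>(P,k)\<in>(Pairs D :: ('a poly \<times> nat) set). if P ^ k dvd S then degree P else 0)"
    proof -
      have e: "{(P,k)\<in>(Pairs D :: ('a poly \<times> nat) set). P ^ k dvd S} = {x\<in>Pairs D. fst x ^ snd x dvd S}" by auto
      show ?thesis unfolding e unfolding case_prod_unfold by (rule sum.inter_filter[OF finite_Pairs])
    qed
    finally have dn: "real (degree S) = real (\<Sum>(P,k)\<in>(Pairs D :: ('a poly \<times> nat) set). if P ^ k dvd S then degree P else 0)"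
      by simp
    have r: "real (degree S) = (\<Sum>(P,k)\<in>(Pairs D :: ('a poly \<times> nat) set). if P ^ k dvd S then real (degree P) else 0)"
      unfolding dn of_nat_sum by (rule sum.cong) auto
    have "real (degree S) / ?q ^ degree S = (\<Sum>(P,k)\<in>(Pairs D :: ('a poly \<times> nat) set). (if P ^ k dvd S then real (degree P) else 0) / ?q ^ degree S)"
      by (simp only: r sum_divide_distrib case_prod_unfold)
    also have "\<dots> = (\<Sum>(P,k)\<in>(Pairs D :: ('a poly \<times> nat) set). if P ^ k dvd S then real (degree P) * ?w S else 0)"
      by (rule sum.cong) auto
    finally show "real (degree S) / ?q ^ degree S =
      (\<Sum>(P,k)\<in>(Pairs D :: ('a poly \<times> nat) set). if P ^ k dvd S then real (degree P) * ?w S else 0)" .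
  qed
  also have "\<dots> = (\<Sum>(P,k)\<in>(Pairs D :: ('a poly \<times> nat) set). \<Sum>S\<in>?S. if P ^ k dvd S then real (degree P) * ?w S else 0)"
    by (subst sum.swap) (simp add: case_prod_unfold)
  also have "\<dots> \<le> (\<Sum>y\<in>(Pairs D :: ('a poly \<times> nat) set). g y)"
  proof (rule sum_mono)
    fix y assume y: "y \<in> (Pairs D :: ('a poly \<times> nat) set)"
    obtain P k where ye: "y = (P,k)" by (cases y)
    have P: "monic P" "irreducible P" "1 \<le> k" "k * degree P \<le> D" using y ye by (auto simp: Pairs_def)
    have kD: "k \<le> D" using P(4) irr_deg_pos[OF P(2)]
      by (metis le_trans mult.right_neutral mult_le_mono2)
    show "(case y of (P,k) \<Rightarrow> \<Sum>S\<in>?S. if P ^ k dvd S then real (degree P) * ?w S else 0) \<le> g y"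
    proof (cases "P \<in> Irr X")
      case False
      have "\<And>S. S \<in> ?S \<Longrightarrow> \<not> P ^ k dvd S"
      proof
        fix S assume S: "S \<in> ?S" and d: "P ^ k dvd S"
        have "P dvd P ^ k" using P(3) by (simp add: dvd_power)
        then have "P dvd S" using d dvd_trans by blast
        then have "P \<in> PF S" using P by (simp add: PF_def)
        then have "P \<in> Irr X" using PF_sub_Irr[of X S] S by (auto simp: Sm_def)
        then show False using False by simp
      qed
      then show ?thesis using ye g0[of y] by simp
    next
      case True
      have Pk0: "P ^ k \<noteq> 0" using irr_nz[OF P(2)] by simp
      have "(\<Sum>S\<in>?S. if P ^ k dvd S then real (degree P) * ?w S else 0)
            = real (degree P) * (\<Sum>S\<in>{S \<in> ?S. P ^ k dvd S}. ?w S)"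
        unfolding sum.inter_filter[OF finite_Sm] sum_distrib_left by (rule sum.cong) auto
      also have "(\<Sum>S\<in>{S \<in> ?S. P ^ k dvd S}. ?w S) \<le> (\<Sum>S\<in>(\<lambda>B. P ^ k * B) ` ?S. ?w S)"
      proof (rule sum_mono2)
        show "finite ((\<lambda>B. P ^ k * B) ` ?S)" by (rule finite_imageI[OF finite_Sm])
        show "{S \<in> ?S. P ^ k dvd S} \<subseteq> (\<lambda>B. P ^ k * B) ` ?S"
        proof
          fix S assume S: "S \<in> {S \<in> ?S. P ^ k dvd S}"
          then obtain B where B: "S = P ^ k * B" by (auto elim: dvdE)
          have Sm: "monic S" "smooth X S" "degree S \<le> D" using S by (auto simp: Sm_def smooth_def)
          have B0: "B \<noteq> 0" using B monic_nz[OF Sm(1)] by auto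
          have "lead_coeff S = lead_coeff (P ^ k) * lead_coeff B" using B by (simp only: lead_coeff_mult)
          then have "monic B" using Sm(1) monic_power[OF P(1), of k] by (simp add: monic_def)
          moreover have "B dvd S" using B by simp
          ultimately have "smooth X B" using smooth_dvd[OF Sm(2)] by blast
          moreover have "degree B \<le> D" using B B0 Pk0 Sm(3) by (simp add: degree_mult_eq)
          ultimately show "S \<in> (\<lambda>B. P ^ k * B) ` ?S" using B by (auto simp: Sm_def)
        qed
      qed auto
      also have "\<dots> = (\<Sum>B\<in>?S. ?w (P ^ k * B))"
        by (rule sum.reindex_cong[where l = "\<lambda>B. P ^ k * B"]) (use Pk0 in \<open>auto intro: inj_onI\<close>)
      also have "\<dots> = (\<Sum>B\<in>?S. ?w P ^ k * ?w B)"
      proof (rule sum.cong[OF refl])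
        fix B :: "'a poly" assume "B \<in> ?S"
        then have "B \<noteq> 0" using monic_nz by (auto simp: Sm_def smooth_def)
        then have "degree (P ^ k * B) = k * degree P + degree B"
          using Pk0 irr_nz[OF P(2)] by (simp add: degree_mult_eq degree_power_eq)
        then show "?w (P ^ k * B) = ?w P ^ k * ?w B"
          by (simp add: power_add power_mult[symmetric] power_one_over mult.commute)
      qed
      also have "\<dots> = ?w P ^ k * ?Z" by (simp add: sum_distrib_left)
      finally have "(\<Sum>S\<in>?S. if P ^ k dvd S then real (degree P) * ?w S else 0)
                   \<le> real (degree P) * (?w P ^ k * ?Z)"
        by (simp add: mult_left_mono)
      then show ?thesis using ye True kD P(3) by (simp add: g_def mult.assoc)
    qed
  qed
  also have "\<dots> \<le> (\<Sum>y\<in>(Pairs D :: ('a poly \<times> nat) set) \<union> ?T. g y)"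
    by (rule sum_mono2) (use g0 finite_Pairs finT in auto)
  also have "\<dots> = (\<Sum>y\<in>?T. g y)"
    by (rule sum.mono_neutral_right) (use finT finite_Pairs in \<open>auto simp: g_def split: if_splits\<close>)
  also have "\<dots> = (\<Sum>P\<in>Irr X. \<Sum>k\<in>{1..D}. real (degree P) * ?w P ^ k * ?Z)"
  proof -
    have "(\<Sum>y\<in>?T. g y) = (\<Sum>(P,k)\<in>?T. real (degree P) * ?w P ^ k * ?Z)"
      by (rule sum.cong) (auto simp: g_def)
    also have "\<dots> = (\<Sum>P\<in>Irr X. \<Sum>k\<in>{1..D}. real (degree P) * ?w P ^ k * ?Z)"
      by (rule sum.cartesian_product[symmetric])
    finally show ?thesis .
  qed
  also have "\<dots> = ?Z * (\<Sum>P\<in>Irr X. real (degree P) * (\<Sum>k\<in>{1..D}. ?w P ^ k))"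
    by (simp add: sum_distrib_left sum_distrib_right mult.commute mult.left_commute)
  also have "\<dots> \<le> ?Z * (\<Sum>P\<in>(Irr X :: 'a poly set). real (degree P) * (2 * ?w P))"
  proof (rule mult_left_mono[OF sum_mono Z0])
    fix P :: "'a poly" assume P: "P \<in> Irr X"
    have d: "1 \<le> degree P" using P irr_deg_pos by (auto simp: Irr_def)
    have "2 \<le> ?q ^ 1" using q by simp
    also have "\<dots> \<le> ?q ^ degree P" by (rule power_increasing[OF d]) (use q in simp)
    finally have "2 \<le> ?q ^ degree P" .
    moreover have "?q ^ degree P > 0" using q by simp
    ultimately have "0 \<le> ?w P" "?w P \<le> 1/2" by (auto simp: field_simps)
    then show "real (degree P) * (\<Sum>k\<in>{1..D}. ?w P ^ k) \<le> real (degree P) * (2 * ?w P)"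
      by (intro mult_left_mono geom_shift) auto
  qed
  also have "\<dots> = ?Z * (2 * (\<Sum>P\<in>(Irr X :: 'a poly set). real (degree P) / ?q ^ degree P))"
    by (simp add: sum_distrib_left mult.commute mult.left_commute)
  also have "\<dots> \<le> ?Z * (2 * real X)"
    using sum_Irr_deg[of X, where 'a='a] Z0 by (intro mult_left_mono) auto
  finally show ?thesis by (simp add: mult.commute mult.left_commute)
qed

lemma alpha_pp_abs: "\<bar>alpha_pp X P m\<bar> \<le> 1"
  by (simp add: alpha_pp_def)

lemma alpha_m1_abs: "\<bar>alpha_m1 X (A::'a::field poly)\<bar> \<le> 1"
proof -
  have "\<bar>alpha_m1 X A\<bar> = (\<Prod>P\<in>{P. monic P \<and> irreducible P \<and> P dvd A}. \<bar>alpha_pp X P (pmult P A)\<bar>)"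
    by (simp add: alpha_m1_def abs_prod)
  also have "\<dots> \<le> 1" by (rule prod_le_1) (auto simp: alpha_pp_abs)
  finally show ?thesis .
qed

lemma triple_sum:
  fixes A :: "'b set" and u v :: "'b \<Rightarrow> real"
  assumes "finite A"
  shows "(\<Sum>(H,S,T)\<in>A \<times> A \<times> A. (v S + v T) * u H * u S * u T) = 2 * (sum u A)^2 * sum (\<lambda>S. v S * u S) A"
proof -
  define Z where "Z = sum u A"
  define W where "W = sum (\<lambda>S. v S * u S) A"
  have i: "(\<Sum>T\<in>A. (v S + v T) * u H * u S * u T) = u H * (v S * u S * Z + u S * W)" for H S
  proof -
    have "(\<Sum>T\<in>A. (v S + v T) * u H * u S * u T) = (\<Sum>T\<in>A. (u H * (v S * u S)) * u T + (u H * u S) * (v T * u T))"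
      by (rule sum.cong) (simp_all add: algebra_simps)
    also have "\<dots> = (u H * (v S * u S)) * Z + (u H * u S) * W"
      unfolding Z_def W_def by (simp only: sum.distrib sum_distrib_left)
    also have "\<dots> = u H * (v S * u S * Z + u S * W)" by (simp add: algebra_simps)
    finally show ?thesis .
  qed
  have ii: "(\<Sum>S\<in>A. u H * (v S * u S * Z + u S * W)) = u H * (2 * Z * W)" for H
  proof -
    have "u H * (2 * Z * W) = u H * (W * Z + Z * W)" by (simp add: algebra_simps)
    also have "W * Z + Z * W = (\<Sum>S\<in>A. v S * u S * Z + u S * W)"
      unfolding sum.distrib by (simp only: W_def Z_def sum_distrib_right)
    finally show ?thesis by (simp add: sum_distrib_left)
  qed
  have "(\<Sum>(H,S,T)\<in>A \<times> A \<times> A. (v S + v T) * u H * u S * u T)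
        = (\<Sum>H\<in>A. \<Sum>(S,T)\<in>A \<times> A. (v S + v T) * u H * u S * u T)"
    by (simp add: sum.cartesian_product case_prod_unfold)
  also have "\<dots> = (\<Sum>H\<in>A. \<Sum>S\<in>A. \<Sum>T\<in>A. (v S + v T) * u H * u S * u T)"
    by (simp add: sum.cartesian_product case_prod_unfold)
  also have "\<dots> = (\<Sum>H\<in>A. u H * (2 * Z * W))"
    by (simp only: i ii)
  also have "\<dots> = 2 * Z^2 * W"
    by (simp only: sum_distrib_right[symmetric]) (simp add: Z_def power2_eq_square algebra_simps)
  finally show ?thesis by (simp add: Z_def W_def)
qed

theorem lemma6p2:
  fixes dummy :: "'a::{field,finite}"
  shows "\<exists>C X0. \<forall>X::nat. X \<ge> X0 \<longrightarrow> (\<forall>R::'a poly. monic R \<longrightarrow>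
     \<bar>\<Sum>(H,S,T)\<in>{(H,S,T). monic H \<and> monic S \<and> monic T \<and> smooth X (H*S*T)
              \<and> coprime S T \<and> coprime (H*S*T) R
              \<and> real (degree (H*S)) \<le> real (degree R) / 10
              \<and> real (degree (H*T)) \<le> real (degree R) / 10}.
        alpha_m1 X (H*S) * alpha_m1 X (H*T) / pnorm (H*S*T) * real (degree (S*T))\<bar>
       \<le> C * real X ^ 4)"
proof (intro exI allI impI)
  fix X :: nat and R :: "'a poly"
  assume X: "1 \<le> X" and R: "monic R"
  let ?q = "real (card (UNIV::'a set))"
  let ?w = "\<lambda>S::'a poly. 1 / ?q ^ degree S"
  let ?D = "degree R"
  let ?A = "Sm X ?D :: 'a poly set"
  let ?Set = "{(H,S,T). monic H \<and> monic S \<and> monic T \<and> smooth X (H*S*T)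
              \<and> coprime S T \<and> coprime (H*S*T) R
              \<and> real (degree (H*S)) \<le> real (degree R) / 10
              \<and> real (degree (H*T)) \<le> real (degree R) / 10}"
  let ?f = "\<lambda>(H,S,T). alpha_m1 X (H*S) * alpha_m1 X (H*T) / pnorm (H*S*T) * real (degree (S*T))"
  let ?g = "\<lambda>(H::'a poly,S::'a poly,T::'a poly). (real (degree S) + real (degree T)) * ?w H * ?w S * ?w T"
  have q: "?q \<ge> 2" using card_ge2[where 'a='a] by linarith
  have sub: "?Set \<subseteq> ?A \<times> ?A \<times> ?A"
  proof
    fix x assume x: "x \<in> ?Set"
    obtain H S T where xe: "x = (H,S,T)" by (cases x) auto
    have m: "monic H" "monic S" "monic T" and sm: "smooth X (H*S*T)"
      and d1: "real (degree (H*S)) \<le> real ?D / 10" and d2: "real (degree (H*T)) \<le> real ?D / 10"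
      using x xe by auto
    have nz: "H \<noteq> 0" "S \<noteq> 0" "T \<noteq> 0" using m monic_nz by auto
    have dHS: "degree H + degree S \<le> ?D" using d1 nz by (simp add: degree_mult_eq)
    have dHT: "degree H + degree T \<le> ?D" using d2 nz by (simp add: degree_mult_eq)
    have "smooth X H" by (rule smooth_dvd[OF sm m(1)]) (simp add: mult.assoc)
    moreover have "smooth X S" by (rule smooth_dvd[OF sm m(2)]) (simp add: mult.commute mult.left_commute)
    moreover have "smooth X T" by (rule smooth_dvd[OF sm m(3)]) simp
    ultimately show "x \<in> ?A \<times> ?A \<times> ?A" using xe dHS dHT by (auto simp: Sm_def)
  qed
  have finA: "finite ?A" by (rule finite_Sm)
  have fin3: "finite (?A \<times> ?A \<times> ?A)" using finA by simp
  have g0: "\<And>x. ?g x \<ge> 0" using q by (auto intro!: mult_nonneg_nonneg)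
  have fg: "\<And>x. x \<in> ?Set \<Longrightarrow> \<bar>?f x\<bar> \<le> ?g x"
  proof -
    fix x assume x: "x \<in> ?Set"
    obtain H S T where xe: "x = (H,S,T)" by (cases x) auto
    have m: "monic H" "monic S" "monic T" using x xe by auto
    have nz: "H \<noteq> 0" "S \<noteq> 0" "T \<noteq> 0" using m monic_nz by auto
    have dST: "degree (S*T) = degree S + degree T" using nz by (simp add: degree_mult_eq)
    have dHST: "degree (H*S*T) = degree H + degree S + degree T" using nz by (simp add: degree_mult_eq)
    have pn: "pnorm (H*S*T) = ?q ^ degree H * ?q ^ degree S * ?q ^ degree T"
      by (simp add: pnorm_def dHST power_add)
    have pos: "pnorm (H*S*T) > 0" using q by (simp add: pn)
    have a: "\<bar>alpha_m1 X (H*S) * alpha_m1 X (H*T)\<bar> \<le> 1"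
      using alpha_m1_abs[of X "H*S"] alpha_m1_abs[of X "H*T"]
      by (simp add: abs_mult mult_le_one)
    have "\<bar>?f x\<bar> = \<bar>alpha_m1 X (H*S) * alpha_m1 X (H*T)\<bar> * (real (degree (S*T)) / pnorm (H*S*T))"
      using xe pos by (simp add: abs_mult)
    also have "\<dots> \<le> 1 * (real (degree (S*T)) / pnorm (H*S*T))"
      by (rule mult_right_mono[OF a]) (use pos in simp)
    also have "\<dots> = ?g x" using xe by (simp add: dST pn)
    finally show "\<bar>?f x\<bar> \<le> ?g x" .
  qed
  let ?Z = "\<Sum>S\<in>?A. ?w S"
  let ?W = "\<Sum>S\<in>?A. real (degree S) * ?w S"
  have Z0: "?Z \<ge> 0" by (auto intro: sum_nonneg)
  have Zb: "?Z \<le> exp 3 * real X" by (rule Z_bound[OF X])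
  have Wb: "?W \<le> 2 * real X * ?Z"
    using W_bound[OF X, of ?D, where 'a='a] by simp
  have "\<bar>sum ?f ?Set\<bar> \<le> sum (\<lambda>x. \<bar>?f x\<bar>) ?Set" by (rule sum_abs)
  also have "\<dots> \<le> sum ?g ?Set" by (rule sum_mono) (rule fg)
  also have "\<dots> \<le> sum ?g (?A \<times> ?A \<times> ?A)"
    by (rule sum_mono2[OF fin3 sub]) (rule g0)
  also have "\<dots> = 2 * ?Z^2 * ?W"
    by (rule triple_sum[OF finA])
  also have "\<dots> \<le> 2 * ?Z^2 * (2 * real X * ?Z)"
    by (rule mult_left_mono[OF Wb]) simp
  also have "\<dots> = 4 * real X * ?Z ^ 3" by (simp add: power2_eq_square power3_eq_cube)
  also have "\<dots> \<le> 4 * real X * (exp 3 * real X) ^ 3"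
    by (rule mult_left_mono[OF power_mono[OF Zb Z0]]) simp
  also have "\<dots> = (4 * exp 3 ^ 3) * real X ^ 4" by (simp add: power_mult_distrib power4_eq_xxxx power3_eq_cube)
  finally show "\<bar>sum ?f ?Set\<bar> \<le> (4 * exp 3 ^ 3) * real X ^ 4" .
qed

end
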